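(* The extended Schr\"odinger-Virasoro algebra $\hat{\mathfrak{so}}$ has no nontrivial $\frac12$-derivations; i.e., every $\frac12$-derivation of $\hat{\mathfrak{so}}$ is a scalar multiple of the identity map.
   Context: The extended Schr\"odinger-Virasoro algebra $\hat{\mathfrak{so}}$ is the complex Lie algebra with basis $\{L_n,M_n,N_n,Y_{n+\frac12},C_L,C_{LN},C_N\mid n\in\mathbb{Z}\}$ and brackets (all others zero, $C_L,C_{LN},C_N$ central): $[L_m,L_n]=(n-m)L_{m+n}+\delta_{m+n,0}\frac{m^3-m}{12}C_L$, $[L_m,M_n]=nM_{m+n}$, $[L_m,N_n]=nN_{m+n}+\delta_{m+n,0}(m^2-m)C_{LN}$, $[N_m,M_n]=2M_{m+n}$, $[L_m,Y_{n+\frac12}]=(n+\frac{1-m}{2})Y_{m+n+\frac12}$, $[N_m,Y_{n+\frac12}]=Y_{m+n+\frac12}$, $[Y_{m+\frac12},Y_{n+\frac12}]=(m-n)M_{m+n+1}$, $[N_m,N_n]=n\delta_{m+n,0}C_N$, for all $m,n\in\mathbb{Z}$. A $\frac12$-derivation of a Lie algebra $L$ is a linear map $\varphi:L\to L$ with $\varphi([x,y])=\frac12([\varphi(x),y]+[x,\varphi(y)])$ for all $x,y$; it is trivial if it is multiplication by a scalar. *)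

theory Defs
  imports Complex_Main
begin

text \<open>Basis of the extended Schroedinger-Virasoro algebra.
  SY n stands for Y_{n+1/2}.\<close>
datatype sv_basis = SL int | SM int | SN int | SY int | CL | CLN | CN

definition sv_space :: "(sv_basis \<Rightarrow> complex) set" where
  "sv_space = {x. finite {b. x b \<noteq> 0}}"

definition supp_sv :: "(sv_basis \<Rightarrow> complex) \<Rightarrow> sv_basis set" where
  "supp_sv x = {b. x b \<noteq> 0}"

fun brb :: "sv_basis \<Rightarrow> sv_basis \<Rightarrow> sv_basis \<Rightarrow> complex" where
  "brb (SL m) (SL n) = (\<lambda>x. (if x = SL (m+n) then of_int (n - m) else 0)
      + (if m + n = 0 \<and> x = CL then of_int (m^3 - m) / 12 else 0))"
| "brb (SL m) (SM n) = (\<lambda>x. if x = SM (m+n) then of_int n else 0)"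
| "brb (SM n) (SL m) = (\<lambda>x. if x = SM (m+n) then - of_int n else 0)"
| "brb (SL m) (SN n) = (\<lambda>x. (if x = SN (m+n) then of_int n else 0)
      + (if m + n = 0 \<and> x = CLN then of_int (m^2 - m) else 0))"
| "brb (SN n) (SL m) = (\<lambda>x. - ((if x = SN (m+n) then of_int n else 0)
      + (if m + n = 0 \<and> x = CLN then of_int (m^2 - m) else 0)))"
| "brb (SN m) (SM n) = (\<lambda>x. if x = SM (m+n) then 2 else 0)"
| "brb (SM n) (SN m) = (\<lambda>x. if x = SM (m+n) then -2 else 0)"
| "brb (SL m) (SY n) = (\<lambda>x. if x = SY (m+n) then of_int n + (1 - of_int m) / 2 else 0)"
| "brb (SY n) (SL m) = (\<lambda>x. if x = SY (m+n) then - (of_int n + (1 - of_int m) / 2) else 0)"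
| "brb (SN m) (SY n) = (\<lambda>x. if x = SY (m+n) then 1 else 0)"
| "brb (SY n) (SN m) = (\<lambda>x. if x = SY (m+n) then -1 else 0)"
| "brb (SY m) (SY n) = (\<lambda>x. if x = SM (m+n+1) then of_int (m - n) else 0)"
| "brb (SN m) (SN n) = (\<lambda>x. if m + n = 0 \<and> x = CN then of_int n else 0)"
| "brb _ _ = (\<lambda>x. 0)"

definition sv_bracket :: "(sv_basis \<Rightarrow> complex) \<Rightarrow> (sv_basis \<Rightarrow> complex) \<Rightarrow> (sv_basis \<Rightarrow> complex)" where
  "sv_bracket x y = (\<lambda>c. \<Sum>a\<in>supp_sv x. \<Sum>b\<in>supp_sv y. x a * y b * brb a b c)"

definition sv_linear :: "((sv_basis \<Rightarrow> complex) \<Rightarrow> (sv_basis \<Rightarrow> complex)) \<Rightarrow> bool" where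
  "sv_linear \<phi> \<longleftrightarrow> (\<forall>x\<in>sv_space. \<phi> x \<in> sv_space)
     \<and> (\<forall>x\<in>sv_space. \<forall>y\<in>sv_space. \<phi> (\<lambda>b. x b + y b) = (\<lambda>b. \<phi> x b + \<phi> y b))
     \<and> (\<forall>c. \<forall>x\<in>sv_space. \<phi> (\<lambda>b. c * x b) = (\<lambda>b. c * \<phi> x b))"

definition half_derivation :: "((sv_basis \<Rightarrow> complex) \<Rightarrow> (sv_basis \<Rightarrow> complex)) \<Rightarrow> bool" where
  "half_derivation \<phi> \<longleftrightarrow> sv_linear \<phi> \<and>
     (\<forall>x\<in>sv_space. \<forall>y\<in>sv_space.
        \<phi> (sv_bracket x y) = (\<lambda>c. (sv_bracket (\<phi> x) y c + sv_bracket x (\<phi> y) c) / 2))"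

end

theory Submission
  imports Defs
begin

definition eb :: "sv_basis \<Rightarrow> sv_basis \<Rightarrow> complex" where
  "eb b = (\<lambda>v. if v = b then 1 else 0)"

fun dd :: "sv_basis \<Rightarrow> int" where
  "dd (SL n) = 2*n" | "dd (SM n) = 2*n" | "dd (SN n) = 2*n" | "dd (SY n) = 2*n+1"
| "dd CL = 0" | "dd CLN = 0" | "dd CN = 0"

lemma all_sv: "(\<forall>x. P x) \<longleftrightarrow> (\<forall>n. P (SL n)) \<and> (\<forall>n. P (SM n)) \<and> (\<forall>n. P (SN n)) \<and> (\<forall>n. P (SY n)) \<and> P CL \<and> P CLN \<and> P CN"
  by (metis sv_basis.exhaust)

lemma eb_apply: "eb b v = (if v = b then 1 else 0)"
  by (simp add: eb_def)

lemma supp_eb: "supp_sv (eb b) = {b}"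
  by (auto simp: supp_sv_def eb_def)

lemma eb_space: "eb b \<in> sv_space"
  by (simp add: sv_space_def supp_eb[unfolded supp_sv_def])

lemma space_add: "x \<in> sv_space \<Longrightarrow> y \<in> sv_space \<Longrightarrow> (\<lambda>v. x v + y v) \<in> sv_space"
proof -
  assume "x \<in> sv_space" "y \<in> sv_space"
  moreover have "{b. x b + y b \<noteq> 0} \<subseteq> {b. x b \<noteq> 0} \<union> {b. y b \<noteq> 0}" by auto
  ultimately show ?thesis unfolding sv_space_def by (auto intro: finite_subset)
qed

lemma space_scale: "x \<in> sv_space \<Longrightarrow> (\<lambda>v. k * x v) \<in> sv_space"
proof -
  assume "x \<in> sv_space"
  moreover have "{b. k * x b \<noteq> 0} \<subseteq> {b. x b \<noteq> 0}" by auto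
  ultimately show ?thesis unfolding sv_space_def by (auto intro: finite_subset)
qed

lemma br_eb_eb: "sv_bracket (eb a) (eb b) = brb a b"
  unfolding sv_bracket_def supp_eb by (simp add: eb_def)

lemma brR:
  assumes "x \<in> sv_space" "finite A" "\<And>a. a \<notin> A \<Longrightarrow> x a * brb a b c = 0"
  shows "sv_bracket x (eb b) c = (\<Sum>a\<in>A. x a * brb a b c)"
proof -
  have fs: "finite (supp_sv x)" using assms(1) by (simp add: sv_space_def supp_sv_def)
  have "sv_bracket x (eb b) c = (\<Sum>a\<in>supp_sv x. x a * brb a b c)"
    unfolding sv_bracket_def supp_eb by (simp add: eb_def)
  also have "\<dots> = (\<Sum>a\<in>supp_sv x \<union> A. x a * brb a b c)"
    by (rule sum.mono_neutral_left) (use fs assms(2) in \<open>auto simp: supp_sv_def\<close>)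
  also have "\<dots> = (\<Sum>a\<in>A. x a * brb a b c)"
    by (rule sum.mono_neutral_right) (use fs assms in auto)
  finally show ?thesis .
qed

lemma brL:
  assumes "y \<in> sv_space" "finite B" "\<And>b. b \<notin> B \<Longrightarrow> y b * brb a b c = 0"
  shows "sv_bracket (eb a) y c = (\<Sum>b\<in>B. y b * brb a b c)"
proof -
  have fs: "finite (supp_sv y)" using assms(1) by (simp add: sv_space_def supp_sv_def)
  have "sv_bracket (eb a) y c = (\<Sum>b\<in>supp_sv y. y b * brb a b c)"
    unfolding sv_bracket_def supp_eb by (simp add: eb_def)
  also have "\<dots> = (\<Sum>b\<in>supp_sv y \<union> B. y b * brb a b c)"
    by (rule sum.mono_neutral_left) (use fs assms(2) in \<open>auto simp: supp_sv_def\<close>)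
  also have "\<dots> = (\<Sum>b\<in>B. y b * brb a b c)"
    by (rule sum.mono_neutral_right) (use fs assms in auto)
  finally show ?thesis .
qed

lemma brR_scaled: "sv_bracket (\<lambda>v. k * eb a v) (eb b) c = k * brb a b c"
  using brR[of "\<lambda>v. k * eb a v" "{a}" b c] space_scale[OF eb_space]
  by (auto simp: eb_def)

lemma brL_scaled: "sv_bracket (eb a) (\<lambda>v. k * eb b v) c = k * brb a b c"
  using brL[of "\<lambda>v. k * eb b v" "{b}" a c] space_scale[OF eb_space]
  by (auto simp: eb_def)

lemma brb_L0: "brb (SL 0) b = (\<lambda>x. (of_int (dd b) / 2) * eb b x)"
  by (cases b) (auto simp: fun_eq_iff eb_def)

lemma br_L0_left: "y \<in> sv_space \<Longrightarrow> sv_bracket (eb (SL 0)) y c = (of_int (dd c) / 2) * y c"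
  using brL[of y "{c}" "SL 0" c] by (simp add: brb_L0 eb_def)

locale halfder =
  fixes \<phi> :: "(sv_basis \<Rightarrow> complex) \<Rightarrow> (sv_basis \<Rightarrow> complex)"
  assumes hd: "half_derivation \<phi>"
begin

lemma sp: "x \<in> sv_space \<Longrightarrow> \<phi> x \<in> sv_space"
  using hd by (simp add: half_derivation_def sv_linear_def)

lemma lin_add: "x \<in> sv_space \<Longrightarrow> y \<in> sv_space \<Longrightarrow> \<phi> (\<lambda>b. x b + y b) = (\<lambda>b. \<phi> x b + \<phi> y b)"
  using hd by (simp add: half_derivation_def sv_linear_def)

lemma lin_scale: "x \<in> sv_space \<Longrightarrow> \<phi> (\<lambda>b. k * x b) = (\<lambda>b. k * \<phi> x b)"
  using hd by (simp add: half_derivation_def sv_linear_def)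

lemma HD: "\<phi> (brb a b) = (\<lambda>c. (sv_bracket (\<phi> (eb a)) (eb b) c + sv_bracket (eb a) (\<phi> (eb b)) c) / 2)"
  using hd eb_space[of a] eb_space[of b] unfolding half_derivation_def
  by (metis br_eb_eb)

lemma H2:
  assumes "brb a b = (\<lambda>x. k * eb b' x)" "finite A" "finite B"
    "\<forall>a'. a' \<notin> A \<longrightarrow> brb a' b c = 0" "\<forall>b''. b'' \<notin> B \<longrightarrow> brb a b'' c = 0"
  shows "2 * k * \<phi> (eb b') c = (\<Sum>a'\<in>A. \<phi> (eb a) a' * brb a' b c) + (\<Sum>b''\<in>B. \<phi> (eb b) b'' * brb a b'' c)"
proof -
  have "\<phi> (brb a b) c = k * \<phi> (eb b') c"
    using assms(1) lin_scale[OF eb_space, of k b'] by simp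
  moreover have "sv_bracket (\<phi> (eb a)) (eb b) c = (\<Sum>a'\<in>A. \<phi> (eb a) a' * brb a' b c)"
    by (rule brR) (use assms sp[OF eb_space] in auto)
  moreover have "sv_bracket (eb a) (\<phi> (eb b)) c = (\<Sum>b''\<in>B. \<phi> (eb b) b'' * brb a b'' c)"
    by (rule brL) (use assms sp[OF eb_space] in auto)
  moreover have "\<phi> (brb a b) c = (sv_bracket (\<phi> (eb a)) (eb b) c + sv_bracket (eb a) (\<phi> (eb b)) c) / 2"
    by (subst HD) simp
  ultimately show ?thesis by (simp add: field_simps)
qed

lemma H2':
  assumes "\<phi> (eb a) = (\<lambda>v. \<alpha> * eb a v)" "brb a b = (\<lambda>x. k * eb b' x)" "finite B"
    "\<forall>b''. b'' \<notin> B \<longrightarrow> brb a b'' c = 0"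
  shows "2 * k * \<phi> (eb b') c = \<alpha> * brb a b c + (\<Sum>b''\<in>B. \<phi> (eb b) b'' * brb a b'' c)"
proof -
  have "\<phi> (brb a b) c = k * \<phi> (eb b') c"
    using assms(2) lin_scale[OF eb_space, of k b'] by simp
  moreover have "sv_bracket (eb a) (\<phi> (eb b)) c = (\<Sum>b''\<in>B. \<phi> (eb b) b'' * brb a b'' c)"
    by (rule brL) (use assms sp[OF eb_space] in auto)
  moreover have "\<phi> (brb a b) c = (sv_bracket (\<phi> (eb a)) (eb b) c + sv_bracket (eb a) (\<phi> (eb b)) c) / 2"
    by (subst HD) simp
  ultimately show ?thesis using assms(1) brR_scaled by (simp add: field_simps)
qed

lemma Hclos:
  assumes "\<phi> (eb a) = (\<lambda>v. \<alpha> * eb a v)" "\<phi> (eb b) = (\<lambda>v. \<alpha> * eb b v)"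
  shows "\<phi> (brb a b) = (\<lambda>c. \<alpha> * brb a b c)"
  using HD[of a b] assms brR_scaled brL_scaled by simp


lemma A_SL: "n \<noteq> 0 \<Longrightarrow> \<phi> (eb (SL 0)) (SL n) = 0"
proof -
  assume n: "n \<noteq> 0"
  have "2 * (of_int n) * \<phi> (eb (SN n)) (SN (2*n)) = (\<Sum>a'\<in>{SL n}. \<phi> (eb (SL 0)) a' * brb a' (SN n) (SN (2*n))) + (\<Sum>b''\<in>{SN (2*n)}. \<phi> (eb (SN n)) b'' * brb (SL 0) b'' (SN (2*n)))"
    by (rule H2) (simp_all add: all_sv fun_eq_iff eb_def)
  then show ?thesis using n by simp
qed


lemma A_SM: "\<phi> (eb (SL 0)) (SM n) = 0"
proof -
  have "2 * (of_int n) * \<phi> (eb (SN n)) (SM (2*n)) = (\<Sum>a'\<in>{SM n}. \<phi> (eb (SL 0)) a' * brb a' (SN n) (SM (2*n))) + (\<Sum>b''\<in>{SM (2*n)}. \<phi> (eb (SN n)) b'' * brb (SL 0) b'' (SM (2*n)))"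
    by (rule H2) (simp_all add: all_sv fun_eq_iff eb_def)
  then show ?thesis by simp
qed

lemma A_SN: "\<phi> (eb (SL 0)) (SN n) = 0"
proof -
  have "2 * (of_int n) * \<phi> (eb (SM n)) (SM (2*n)) = (\<Sum>a'\<in>{SL n, SN n}. \<phi> (eb (SL 0)) a' * brb a' (SM n) (SM (2*n))) + (\<Sum>b''\<in>{SM (2*n)}. \<phi> (eb (SM n)) b'' * brb (SL 0) b'' (SM (2*n)))"
    by (rule H2) (simp_all add: all_sv fun_eq_iff eb_def)
  then have "of_int n * \<phi> (eb (SL 0)) (SL n) + 2 * \<phi> (eb (SL 0)) (SN n) = 0" by (simp add: algebra_simps)
  moreover have "of_int n * \<phi> (eb (SL 0)) (SL n) = 0" using A_SL by (cases "n = 0") auto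
  ultimately show ?thesis by simp
qed

lemma A_SY: "\<phi> (eb (SL 0)) (SY m) = 0"
proof -
  define Y where "Y = \<phi> (eb (SL 0)) (SY m)"
  define F1 where "F1 = \<phi> (eb (SL 1)) (SY (m+1))"
  define F2 where "F2 = \<phi> (eb (SL (-1))) (SY (m-1))"
  define M where "M = (of_int m :: complex)"
  have "2 * 1 * \<phi> (eb (SL 1)) (SY (m+1)) = (\<Sum>a'\<in>{SY m}. \<phi> (eb (SL 0)) a' * brb a' (SL 1) (SY (m+1))) + (\<Sum>b''\<in>{SY (m+1)}. \<phi> (eb (SL 1)) b'' * brb (SL 0) b'' (SY (m+1)))"
    by (rule H2) (simp_all add: all_sv fun_eq_iff eb_def)
  then have e1: "(1 - 2*M) * F1 + 2 * M * Y = 0"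
    unfolding Y_def F1_def M_def by (simp add: field_simps)
  have "2 * (-1) * \<phi> (eb (SL (-1))) (SY (m-1)) = (\<Sum>a'\<in>{SY m}. \<phi> (eb (SL 0)) a' * brb a' (SL (-1)) (SY (m-1))) + (\<Sum>b''\<in>{SY (m-1)}. \<phi> (eb (SL (-1))) b'' * brb (SL 0) b'' (SY (m-1)))"
    by (rule H2) (simp_all add: all_sv fun_eq_iff eb_def)
  then have e2: "(2*M + 3) * F2 - 2 * (M + 1) * Y = 0"
    unfolding Y_def F2_def M_def by (simp add: field_simps)
  have "2 * (-2) * \<phi> (eb (SL 0)) (SY m) = (\<Sum>a'\<in>{SY (m+1)}. \<phi> (eb (SL 1)) a' * brb a' (SL (-1)) (SY m)) + (\<Sum>b''\<in>{SY (m-1)}. \<phi> (eb (SL (-1))) b'' * brb (SL 1) b'' (SY m))"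
    by (rule H2) (simp_all add: all_sv fun_eq_iff eb_def)
  then have e3: "-4 * Y + (M + 2) * F1 - (M - 1) * F2 = 0"
    unfolding Y_def F1_def F2_def M_def by (simp add: field_simps)
  have "-10 * Y = (1-2*M)*(2*M+3)*(-4*Y+(M+2)*F1-(M-1)*F2) - (M+2)*(2*M+3)*((1-2*M)*F1+2*M*Y) + (M-1)*(1-2*M)*((2*M+3)*F2-2*(M+1)*Y)"
    by (simp add: algebra_simps)
  also have "\<dots> = 0" using e1 e2 e3 by simp
  finally show ?thesis unfolding Y_def by simp
qed

lemma A_C: "\<phi> (eb (SL 0)) CL = 0" "\<phi> (eb (SL 0)) CLN = 0" "\<phi> (eb (SL 0)) CN = 0"
proof -
  have "2 * (-2) * \<phi> (eb (SL 0)) CL = (\<Sum>a'\<in>{}. \<phi> (eb (SL 1)) a' * brb a' (SL (-1)) CL) + (\<Sum>b''\<in>{}. \<phi> (eb (SL (-1))) b'' * brb (SL 1) b'' CL)"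
    by (rule H2) (simp_all add: all_sv fun_eq_iff eb_def)
  then show "\<phi> (eb (SL 0)) CL = 0" by simp
  have "2 * (-2) * \<phi> (eb (SL 0)) CN = (\<Sum>a'\<in>{}. \<phi> (eb (SL 1)) a' * brb a' (SL (-1)) CN) + (\<Sum>b''\<in>{}. \<phi> (eb (SL (-1))) b'' * brb (SL 1) b'' CN)"
    by (rule H2) (simp_all add: all_sv fun_eq_iff eb_def)
  then show "\<phi> (eb (SL 0)) CN = 0" by simp
  have "2 * 1 * \<phi> (eb (SL 1)) (SN 1) = (\<Sum>a'\<in>{}. \<phi> (eb (SL 0)) a' * brb a' (SL 1) (SN 1)) + (\<Sum>b''\<in>{SN 1}. \<phi> (eb (SL 1)) b'' * brb (SL 0) b'' (SN 1))"
    by (rule H2) (simp_all add: all_sv fun_eq_iff eb_def)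
  then have z: "\<phi> (eb (SL 1)) (SN 1) = 0" by simp
  have "2 * (-2) * \<phi> (eb (SL 0)) CLN = (\<Sum>a'\<in>{SN 1}. \<phi> (eb (SL 1)) a' * brb a' (SL (-1)) CLN) + (\<Sum>b''\<in>{}. \<phi> (eb (SL (-1))) b'' * brb (SL 1) b'' CLN)"
    by (rule H2) (simp_all add: all_sv fun_eq_iff eb_def)
  then show "\<phi> (eb (SL 0)) CLN = 0" using z by simp
qed

lemma u_form: "\<phi> (eb (SL 0)) = (\<lambda>v. \<phi> (eb (SL 0)) (SL 0) * eb (SL 0) v)"
proof
  fix v show "\<phi> (eb (SL 0)) v = \<phi> (eb (SL 0)) (SL 0) * eb (SL 0) v"
    by (cases v) (auto simp: eb_apply A_SL A_SM A_SN A_SY A_C)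
qed


definition al :: complex where "al = \<phi> (eb (SL 0)) (SL 0)"

lemma u_form': "\<phi> (eb (SL 0)) = (\<lambda>v. al * eb (SL 0) v)"
  using u_form unfolding al_def .

lemma F: assumes "dd c \<noteq> 2 * dd b" shows "\<phi> (eb b) c = al * eb b c"
proof -
  have h: "\<phi> (brb (SL 0) b) c = (sv_bracket (\<phi> (eb (SL 0))) (eb b) c + sv_bracket (eb (SL 0)) (\<phi> (eb b)) c) / 2"
    by (subst HD) simp
  have "\<phi> (brb (SL 0) b) = (\<lambda>x. (of_int (dd b) / 2) * \<phi> (eb b) x)"
    unfolding brb_L0 by (rule lin_scale[OF eb_space])
  moreover have "sv_bracket (\<phi> (eb (SL 0))) (eb b) c = al * ((of_int (dd b) / 2) * eb b c)"
    unfolding u_form' brR_scaled brb_L0 ..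
  moreover have "sv_bracket (eb (SL 0)) (\<phi> (eb b)) c = (of_int (dd c) / 2) * \<phi> (eb b) c"
    by (rule br_L0_left[OF sp[OF eb_space]])
  ultimately have "(of_int (dd b) / 2) * \<phi> (eb b) c = (al * ((of_int (dd b) / 2) * eb b c) + (of_int (dd c) / 2) * \<phi> (eb b) c) / 2"
    using h by simp
  then have e: "of_int (2 * dd b - dd c) * \<phi> (eb b) c = al * of_int (dd b) * eb b c"
    by (simp add: field_simps)
  show ?thesis
  proof (cases "c = b")
    case True
    then have "dd b \<noteq> 0" using assms by auto
    with e True show ?thesis by (simp add: eb_apply)
  next
    case False
    have "2 * dd b - dd c \<noteq> 0" using assms by simp
    then have nz: "(of_int (2 * dd b - dd c) :: complex) \<noteq> 0" by (metis of_int_eq_0_iff)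
    from e False have "of_int (2 * dd b - dd c) * \<phi> (eb b) c = 0" by (simp add: eb_apply)
    with nz False show ?thesis by (simp add: eb_apply)
  qed
qed

lemma C_SL: assumes n: "n \<noteq> 0" shows "\<phi> (eb (SL n)) = (\<lambda>v. al * eb (SL n) v)"
proof -
  have f1: "\<phi> (eb (SL (4*n))) c = 0" if "c \<in> {SL (5*n), SM (5*n), SN (5*n)}" for c
    using F[of c "SL (4*n)"] that n by (auto simp: eb_apply)
  have f2: "\<phi> (eb (SL (3*n))) c = 0" if "c \<in> {SL (4*n), SM (4*n), SN (4*n)}" for c
    using F[of c "SL (3*n)"] that n by (auto simp: eb_apply)
  have "2 * of_int (2*n) * \<phi> (eb (SL (4*n))) (SL (5*n)) = (\<Sum>a'\<in>{SL (2*n)}. \<phi> (eb (SL n)) a' * brb a' (SL (3*n)) (SL (5*n))) + (\<Sum>b''\<in>{SL (4*n)}. \<phi> (eb (SL (3*n))) b'' * brb (SL n) b'' (SL (5*n)))"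
    by (rule H2) (use n in \<open>simp_all add: all_sv fun_eq_iff eb_apply\<close>)
  then have c1: "\<phi> (eb (SL n)) (SL (2*n)) = 0" using f1 f2 n by simp
  have "2 * of_int (2*n) * \<phi> (eb (SL (4*n))) (SM (5*n)) = (\<Sum>a'\<in>{SM (2*n)}. \<phi> (eb (SL n)) a' * brb a' (SL (3*n)) (SM (5*n))) + (\<Sum>b''\<in>{SM (4*n)}. \<phi> (eb (SL (3*n))) b'' * brb (SL n) b'' (SM (5*n)))"
    by (rule H2) (use n in \<open>simp_all add: all_sv fun_eq_iff eb_apply\<close>)
  then have c2: "\<phi> (eb (SL n)) (SM (2*n)) = 0" using f1 f2 n by simp
  have "2 * of_int (2*n) * \<phi> (eb (SL (4*n))) (SN (5*n)) = (\<Sum>a'\<in>{SN (2*n)}. \<phi> (eb (SL n)) a' * brb a' (SL (3*n)) (SN (5*n))) + (\<Sum>b''\<in>{SN (4*n)}. \<phi> (eb (SL (3*n))) b'' * brb (SL n) b'' (SN (5*n)))"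
    by (rule H2) (use n in \<open>simp_all add: all_sv fun_eq_iff eb_apply\<close>)
  then have c3: "\<phi> (eb (SL n)) (SN (2*n)) = 0" using f1 f2 n by simp
  show ?thesis
  proof
    fix v show "\<phi> (eb (SL n)) v = al * eb (SL n) v"
    proof (cases "dd v = 2 * dd (SL n)")
      case False then show ?thesis by (rule F)
    next
      case True
      then show ?thesis using c1 c2 c3 n by (cases v) (auto simp: eb_apply, presburger)
    qed
  qed
qed


lemma Dgen:
  assumes "\<phi> (eb a) = (\<lambda>v. al * eb a v)" "brb a b = (\<lambda>x. k * eb b' x)"
    "brb a b0 c \<noteq> 0" "\<forall>b''. b'' \<notin> {b0} \<longrightarrow> brb a b'' c = 0" "dd c \<noteq> 2 * dd b'" "c \<noteq> b'"
  shows "\<phi> (eb b) b0 = 0"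
proof -
  have "2 * k * \<phi> (eb b') c = al * brb a b c + (\<Sum>b''\<in>{b0}. \<phi> (eb b) b'' * brb a b'' c)"
    by (rule H2') (use assms in auto)
  moreover have "\<phi> (eb b') c = 0" using F[OF assms(5)] assms(6) by (simp add: eb_apply)
  moreover have "brb a b c = 0" using assms(2,6) by (simp add: eb_apply)
  ultimately show ?thesis using assms(3) by simp
qed

lemma D_SM: assumes n: "n \<noteq> 0" shows "\<phi> (eb (SM n)) = (\<lambda>v. al * eb (SM n) v)"
proof -
  have c1: "\<phi> (eb (SM n)) (SL (2*n)) = 0"
    by (rule Dgen[where a="SL (4*n)" and k="of_int n" and b'="SM (5*n)" and c="SL (6*n)"])
       (use n in \<open>simp_all add: C_SL all_sv fun_eq_iff eb_apply\<close>)
  have c2: "\<phi> (eb (SM n)) (SM (2*n)) = 0"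
    by (rule Dgen[where a="SL (4*n)" and k="of_int n" and b'="SM (5*n)" and c="SM (6*n)"])
       (use n in \<open>simp_all add: C_SL all_sv fun_eq_iff eb_apply\<close>)
  have c3: "\<phi> (eb (SM n)) (SN (2*n)) = 0"
    by (rule Dgen[where a="SL (4*n)" and k="of_int n" and b'="SM (5*n)" and c="SN (6*n)"])
       (use n in \<open>simp_all add: C_SL all_sv fun_eq_iff eb_apply\<close>)
  show ?thesis
  proof
    fix v show "\<phi> (eb (SM n)) v = al * eb (SM n) v"
    proof (cases "dd v = 2 * dd (SM n)")
      case False then show ?thesis by (rule F)
    next
      case True
      then show ?thesis using c1 c2 c3 n by (cases v) (auto simp: eb_apply, presburger)
    qed
  qed
qed

lemma D_SN: assumes n: "n \<noteq> 0" shows "\<phi> (eb (SN n)) = (\<lambda>v. al * eb (SN n) v)"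
proof -
  have c1: "\<phi> (eb (SN n)) (SL (2*n)) = 0"
    by (rule Dgen[where a="SL (4*n)" and k="of_int n" and b'="SN (5*n)" and c="SL (6*n)"])
       (use n in \<open>simp_all add: C_SL all_sv fun_eq_iff eb_apply\<close>)
  have c2: "\<phi> (eb (SN n)) (SM (2*n)) = 0"
    by (rule Dgen[where a="SL (4*n)" and k="of_int n" and b'="SN (5*n)" and c="SM (6*n)"])
       (use n in \<open>simp_all add: C_SL all_sv fun_eq_iff eb_apply\<close>)
  have c3: "\<phi> (eb (SN n)) (SN (2*n)) = 0"
    by (rule Dgen[where a="SL (4*n)" and k="of_int n" and b'="SN (5*n)" and c="SN (6*n)"])
       (use n in \<open>simp_all add: C_SL all_sv fun_eq_iff eb_apply\<close>)
  show ?thesis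
  proof
    fix v show "\<phi> (eb (SN n)) v = al * eb (SN n) v"
    proof (cases "dd v = 2 * dd (SN n)")
      case False then show ?thesis by (rule F)
    next
      case True
      then show ?thesis using c1 c2 c3 n by (cases v) (auto simp: eb_apply, presburger)
    qed
  qed
qed

lemma D_SY: "\<phi> (eb (SY n)) = (\<lambda>v. al * eb (SY n) v)"
proof -
  have n: "4*n+2 \<noteq> 0" by presburger
  have "(of_int (-2*n) :: complex) \<noteq> of_int 1" unfolding of_int_eq_iff by presburger
  then have n': "- (2 * (of_int n::complex)) \<noteq> 1" by simp
  have "(of_int (2*n+1) :: complex) \<noteq> of_int 0" unfolding of_int_eq_iff by presburger
  then have n'': "2 * (of_int n::complex) + 1 \<noteq> 0" by simp
  have c1: "\<phi> (eb (SY n)) (SL (2*n+1)) = 0"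
    by (rule Dgen[where a="SL (4*n+2)" and k="of_int n + (1 - of_int (4*n+2))/2" and b'="SY (5*n+2)" and c="SL (6*n+3)"])
       (use n n' n'' in \<open>simp_all add: C_SL all_sv fun_eq_iff eb_apply\<close>)
  have c2: "\<phi> (eb (SY n)) (SM (2*n+1)) = 0"
    by (rule Dgen[where a="SL (4*n+2)" and k="of_int n + (1 - of_int (4*n+2))/2" and b'="SY (5*n+2)" and c="SM (6*n+3)"])
       (use n n' n'' in \<open>simp_all add: C_SL all_sv fun_eq_iff eb_apply\<close>)
  have c3: "\<phi> (eb (SY n)) (SN (2*n+1)) = 0"
    by (rule Dgen[where a="SL (4*n+2)" and k="of_int n + (1 - of_int (4*n+2))/2" and b'="SY (5*n+2)" and c="SN (6*n+3)"])
       (use n n' n'' in \<open>simp_all add: C_SL all_sv fun_eq_iff eb_apply\<close>)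
  show ?thesis
  proof
    fix v show "\<phi> (eb (SY n)) v = al * eb (SY n) v"
    proof (cases "dd v = 2 * dd (SY n)")
      case False then show ?thesis by (rule F)
    next
      case True
      then have "v = SL (2*n+1) \<or> v = SM (2*n+1) \<or> v = SN (2*n+1)"
        apply (cases v) apply auto apply presburger+ done
      then show ?thesis using c1 c2 c3 by (auto simp: eb_apply)
    qed
  qed
qed


lemma E2:
  assumes "brb a b = (\<lambda>x. p * eb bu x + q * eb bw x)" "q \<noteq> 0"
    "\<phi> (eb a) = (\<lambda>v. al * eb a v)" "\<phi> (eb b) = (\<lambda>v. al * eb b v)" "\<phi> (eb bu) = (\<lambda>v. al * eb bu v)"
  shows "\<phi> (eb bw) = (\<lambda>v. al * eb bw v)"
proof
  fix v
  have "\<phi> (brb a b) = (\<lambda>x. p * \<phi> (eb bu) x + q * \<phi> (eb bw) x)"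
    unfolding assms(1)
    by (simp add: lin_add[OF space_scale[OF eb_space] space_scale[OF eb_space]] lin_scale[OF eb_space])
  moreover have "\<phi> (brb a b) = (\<lambda>c. al * brb a b c)" by (rule Hclos[OF assms(3,4)])
  ultimately have "p * \<phi> (eb bu) v + q * \<phi> (eb bw) v = al * (p * eb bu v + q * eb bw v)"
    using assms(1) by (metis (no_types, lifting))
  then have "q * \<phi> (eb bw) v = q * (al * eb bw v)" using assms(5) by (simp add: algebra_simps)
  then show "\<phi> (eb bw) v = al * eb bw v" using assms(2) by simp
qed

lemma all_b: "\<phi> (eb b) = (\<lambda>v. al * eb b v)"
proof -
  have SM0: "\<phi> (eb (SM 0)) = (\<lambda>v. al * eb (SM 0) v)"
    by (rule E2[where a="SY 0" and b="SY (-1)" and p=0 and bu="SL 0" and q=1])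
       (simp_all add: fun_eq_iff eb_apply D_SY u_form')
  have SN0: "\<phi> (eb (SN 0)) = (\<lambda>v. al * eb (SN 0) v)"
    by (rule E2[where a="SL 1" and b="SN (-1)" and p=0 and bu="SL 0" and q="-1"])
       (simp_all add: fun_eq_iff eb_apply D_SN C_SL u_form')
  have CL: "\<phi> (eb CL) = (\<lambda>v. al * eb CL v)"
    by (rule E2[where a="SL 2" and b="SL (-2)" and p="-4" and bu="SL 0" and q="1/2"])
       (simp_all add: fun_eq_iff eb_apply C_SL u_form')
  have CLN: "\<phi> (eb CLN) = (\<lambda>v. al * eb CLN v)"
    by (rule E2[where a="SL 2" and b="SN (-2)" and p="-2" and bu="SN 0" and q="2"])
       (simp_all add: fun_eq_iff eb_apply C_SL D_SN SN0)
  have CN: "\<phi> (eb CN) = (\<lambda>v. al * eb CN v)"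
    by (rule E2[where a="SN 1" and b="SN (-1)" and p=0 and bu="SL 0" and q="-1"])
       (simp_all add: fun_eq_iff eb_apply D_SN u_form')
  show ?thesis
  proof (cases b)
    case (SL n) then show ?thesis using u_form' C_SL by (cases "n = 0") auto
  next
    case (SM n) then show ?thesis using SM0 D_SM by (cases "n = 0") auto
  next
    case (SN n) then show ?thesis using SN0 D_SN by (cases "n = 0") auto
  qed (use D_SY CL CLN CN in auto)
qed

lemma sum_space: "finite S \<Longrightarrow> (\<lambda>v. \<Sum>b\<in>S. g b * eb b v) \<in> sv_space"
proof (induction S rule: finite_induct)
  case empty
  have "(\<lambda>v. 0 * eb CL v) \<in> sv_space" by (rule space_scale[OF eb_space])
  then show ?case by simp
next
  case (insert x F)
  then show ?case using space_add[OF space_scale[OF eb_space] insert(3), of "g x" x] by simp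
qed

lemma ext_sum: "finite S \<Longrightarrow> \<phi> (\<lambda>v. \<Sum>b\<in>S. g b * eb b v) = (\<lambda>v. al * (\<Sum>b\<in>S. g b * eb b v))"
proof (induction S rule: finite_induct)
  case empty
  have "\<phi> (\<lambda>v. 0 * eb CL v) = (\<lambda>v. 0 * \<phi> (eb CL) v)" by (rule lin_scale[OF eb_space])
  then show ?case by simp
next
  case (insert x F)
  have "\<phi> (\<lambda>v. \<Sum>b\<in>insert x F. g b * eb b v) = \<phi> (\<lambda>v. g x * eb x v + (\<Sum>b\<in>F. g b * eb b v))"
    using insert by simp
  also have "\<dots> = (\<lambda>v. \<phi> (\<lambda>v. g x * eb x v) v + \<phi> (\<lambda>v. \<Sum>b\<in>F. g b * eb b v) v)"
    by (rule lin_add[OF space_scale[OF eb_space] sum_space[OF insert(1)]])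
  also have "\<dots> = (\<lambda>v. al * (\<Sum>b\<in>insert x F. g b * eb b v))"
    using insert by (simp add: lin_scale[OF eb_space] all_b algebra_simps)
  finally show ?case .
qed

lemma final: "x \<in> sv_space \<Longrightarrow> \<phi> x = (\<lambda>b. al * x b)"
proof -
  assume x: "x \<in> sv_space"
  have fs: "finite (supp_sv x)" using x by (simp add: sv_space_def supp_sv_def)
  have xe: "x = (\<lambda>v. \<Sum>b\<in>supp_sv x. x b * eb b v)"
  proof
    fix v
    have "(\<Sum>b\<in>supp_sv x. x b * eb b v) = (\<Sum>b\<in>supp_sv x. if v = b then x b else 0)"
      by (rule sum.cong) (auto simp: eb_apply)
    also have "\<dots> = x v" using fs by (simp add: supp_sv_def)
    finally show "x v = (\<Sum>b\<in>supp_sv x. x b * eb b v)" by simp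
  qed
  show ?thesis by (subst (1 2) xe) (rule ext_sum[OF fs])
qed

end

theorem mainTheorem3:
  assumes "half_derivation \<phi>"
  shows "\<exists>c::complex. \<forall>x\<in>sv_space. \<phi> x = (\<lambda>b. c * x b)"
  using halfder.final[OF halfder.intro[OF assms]] by blast

end
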